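(* Any satisfiable $d$-dim linear system $S$ has a solution $x\in\mathbb{Z}^d$ such that $\|x\|_1\leq \mathrm{lcm}(S)\cdot\left(d+\left(2+d+d^{2}\cdot\|S\|\right)^{2d+1}\right)$.
   Context: For a variable $\mathbf{x}$ ranging over $\mathbb{Z}^d$: an equality constraint is $\langle\alpha,\mathbf{x}\rangle=c$ and an inequality constraint is $\langle\alpha,\mathbf{x}\rangle\geq c$, with $\alpha\in\mathbb{Z}^d$, $c\in\mathbb{Z}$; a divisibility constraint is $\langle\alpha,\mathbf{x}\rangle\equiv c \pmod m$ with $m\in\mathbb{N}_+$, $\alpha\in[0,m-1]^d$, $c\in[0,m-1]$. A $d$-dim linear system $S$ is a propositional formula (boolean combination) whose atoms are such constraints for the fixed variable $\mathbf{x}$; its solutions are the $x\in\mathbb{Z}^d$ satisfying it, and $S$ is satisfiable if it has a solution. $\|S\|$ is the least $s\in\mathbb{N}$ with $\max\{\|\alpha\|,|c|\}\leq s$ for all equality and inequality constraints in $S$ (where $\|\alpha\|=\max_i|\alpha(i)|$), and $\mathrm{lcm}(S)$ is the least common multiple of all moduli $m$ of divisibility constraints in $S$ (equal to $1$ if there are none). $\|x\|_1=\sum_i|x(i)|$. *)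

theory Defs
  imports Main
begin

definition inner :: "int list \<Rightarrow> int list \<Rightarrow> int" where
  "inner a x = (\<Sum>i<length a. a ! i * x ! i)"

datatype constr = Eq "int list" int | Geq "int list" int | Dvd "int list" int nat

datatype lsys = Atom constr | TT | FF | Neg lsys | Conj lsys lsys | Disj lsys lsys

fun atoms :: "lsys \<Rightarrow> constr set" where
  "atoms (Atom a) = {a}"
| "atoms TT = {}"
| "atoms FF = {}"
| "atoms (Neg p) = atoms p"
| "atoms (Conj p q) = atoms p \<union> atoms q"
| "atoms (Disj p q) = atoms p \<union> atoms q"

fun constr_wf :: "nat \<Rightarrow> constr \<Rightarrow> bool" where
  "constr_wf d (Eq a c) = (length a = d)"
| "constr_wf d (Geq a c) = (length a = d)"
| "constr_wf d (Dvd a c m) = (length a = d \<and> m > 0 \<and> (\<forall>i<d. 0 \<le> a ! i \<and> a ! i < int m)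
                              \<and> 0 \<le> c \<and> c < int m)"

definition linsys :: "nat \<Rightarrow> lsys \<Rightarrow> bool" where
  "linsys d S = (\<forall>a\<in>atoms S. constr_wf d a)"

fun csat :: "constr \<Rightarrow> int list \<Rightarrow> bool" where
  "csat (Eq a c) x = (inner a x = c)"
| "csat (Geq a c) x = (inner a x \<ge> c)"
| "csat (Dvd a c m) x = ((inner a x) mod (int m) = c mod (int m))"

fun holds :: "lsys \<Rightarrow> int list \<Rightarrow> bool" where
  "holds (Atom a) x = csat a x"
| "holds TT x = True"
| "holds FF x = False"
| "holds (Neg p) x = (\<not> holds p x)"
| "holds (Conj p q) x = (holds p x \<and> holds q x)"
| "holds (Disj p q) x = (holds p x \<or> holds q x)"

definition is_solution :: "nat \<Rightarrow> lsys \<Rightarrow> int list \<Rightarrow> bool" where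
  "is_solution d S x = (length x = d \<and> holds S x)"

definition satisfiable :: "nat \<Rightarrow> lsys \<Rightarrow> bool" where
  "satisfiable d S = (\<exists>x. is_solution d S x)"

definition vnorm :: "int list \<Rightarrow> nat" where
  "vnorm a = Max (insert 0 (set (map (\<lambda>v. nat \<bar>v\<bar>) a)))"

definition norm1 :: "int list \<Rightarrow> nat" where
  "norm1 x = (\<Sum>v\<leftarrow>x. nat \<bar>v\<bar>)"

fun cbound :: "constr \<Rightarrow> nat \<Rightarrow> bool" where
  "cbound (Eq a c) s = (max (vnorm a) (nat \<bar>c\<bar>) \<le> s)"
| "cbound (Geq a c) s = (max (vnorm a) (nat \<bar>c\<bar>) \<le> s)"
| "cbound (Dvd a c m) s = True"

definition sys_norm :: "lsys \<Rightarrow> nat" where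
  "sys_norm S = (LEAST s. \<forall>a\<in>atoms S. cbound a s)"

fun modulus :: "constr \<Rightarrow> nat" where
  "modulus (Dvd a c m) = m"
| "modulus _ = 1"

definition sys_lcm :: "lsys \<Rightarrow> nat" where
  "sys_lcm S = Lcm (modulus ` atoms S)"

end

theory Submission
  imports Defs "Jordan_Normal_Form.Determinant"
begin

lemma det_bound:
  fixes A :: "int mat" and s :: int
  assumes A: "A \<in> carrier_mat n n" and b: "\<And>i j. i < n \<Longrightarrow> j < n \<Longrightarrow> \<bar>A $$ (i,j)\<bar> \<le> s"
  shows "\<bar>det A\<bar> \<le> fact n * s ^ n"
proof -
  have fin: "finite {p. p permutes {0..<n}}" by (simp add: finite_permutations)
  have "\<bar>det A\<bar> = \<bar>\<Sum>p\<in>{p. p permutes {0..<n}}. signof p * (\<Prod>i = 0..<n. A $$ (i, p i))\<bar>"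
    using det_def'[OF A] by simp
  also have "\<dots> \<le> (\<Sum>p\<in>{p. p permutes {0..<n}}. \<bar>signof p * (\<Prod>i = 0..<n. A $$ (i, p i))\<bar>)"
    by (rule sum_abs)
  also have "\<dots> \<le> (\<Sum>p\<in>{p. p permutes {0..<n}}. s ^ n)"
  proof (rule sum_mono)
    fix p assume "p \<in> {p. p permutes {0..<n}}"
    then have p: "p permutes {0..<n}" by simp
    have "\<bar>signof p * (\<Prod>i = 0..<n. A $$ (i, p i))\<bar> = (\<Prod>i = 0..<n. \<bar>A $$ (i, p i)\<bar>)"
      by (simp add: abs_mult abs_prod sign_def)
    also have "\<dots> \<le> (\<Prod>i = 0..<n. s)"
      by (rule prod_mono) (use p b permutes_in_image in auto)
    finally show "\<bar>signof p * (\<Prod>i = 0..<n. A $$ (i, p i))\<bar> \<le> s ^ n" by simp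
  qed
  also have "\<dots> = fact n * s ^ n"
    using card_permutations[of "{0..<n}" n] by simp
  finally show ?thesis .
qed

lemma cofactor_bound:
  fixes A :: "int mat" and s :: int
  assumes A: "A \<in> carrier_mat n n" and b: "\<And>i j. i < n \<Longrightarrow> j < n \<Longrightarrow> \<bar>A $$ (i,j)\<bar> \<le> s"
    and i: "i < n" and j: "j < n"
  shows "\<bar>cofactor A i j\<bar> \<le> fact (n - 1) * s ^ (n - 1)"
proof -
  have "\<bar>det (mat_delete A i j)\<bar> \<le> fact (n - 1) * s ^ (n - 1)"
  proof (rule det_bound)
    show "mat_delete A i j \<in> carrier_mat (n - 1) (n - 1)" using mat_delete_carrier[OF A] .
    fix i' j' assume "i' < n - 1" "j' < n - 1"
    then show "\<bar>mat_delete A i j $$ (i', j')\<bar> \<le> s"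
      using A unfolding mat_delete_def by (auto intro!: b)
  qed
  then show ?thesis unfolding cofactor_def by (simp add: abs_mult)
qed

definition sub :: "(nat \<Rightarrow> nat \<Rightarrow> int) \<Rightarrow> nat list \<Rightarrow> nat list \<Rightarrow> int mat" where
  "sub B rs cs = mat (length rs) (length cs) (\<lambda>(i,j). B (rs!i) (cs!j))"

lemma sub_carrier[simp]: "sub B rs cs \<in> carrier_mat (length rs) (length cs)"
  unfolding sub_def by simp

lemma sub_dims[simp]: "dim_row (sub B rs cs) = length rs" "dim_col (sub B rs cs) = length cs"
  unfolding sub_def by simp_all

lemma sub_index[simp]: "i < length rs \<Longrightarrow> j < length cs \<Longrightarrow> sub B rs cs $$ (i,j) = B (rs!i) (cs!j)"
  unfolding sub_def by simp

lemma KL: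
  fixes B :: "nat \<Rightarrow> nat \<Rightarrow> int" and s :: int
  assumes s: "s \<ge> 1" and b: "\<And>i j. i < p \<Longrightarrow> j < q \<Longrightarrow> \<bar>B i j\<bar> \<le> s"
  shows "(\<exists>z. (\<exists>j<q. z j \<noteq> 0) \<and> (\<forall>j<q. \<bar>z j\<bar> \<le> fact (q-1) * s^(q-1)) \<and> (\<forall>i<p. (\<Sum>j<q. B i j * z j) = 0))
    \<or> (\<forall>x M. (\<forall>i<p. \<bar>\<Sum>j<q. B i j * x j\<bar> \<le> M) \<longrightarrow> (\<forall>j<q. \<bar>x j\<bar> \<le> fact q * s^(q-1) * M))"
proof -
  define good where "good r \<longleftrightarrow> (\<exists>rs cs. length rs = r \<and> length cs = r \<and> distinct rs \<and> distinct cs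
     \<and> set rs \<subseteq> {..<p} \<and> set cs \<subseteq> {..<q} \<and> det (sub B rs cs) \<noteq> 0)" for r
  have g0: "good 0" unfolding good_def
    by (rule exI[of _ "[]"], rule exI[of _ "[]"]) (use det_dim_zero[of "sub B [] []"] sub_carrier[of B "[]" "[]"] in simp)
  have gb: "r \<le> q" if "good r" for r
  proof -
    from that obtain cs where "length cs = r" "distinct cs" "set cs \<subseteq> {..<q}" unfolding good_def by blast
    then show ?thesis using card_mono[of "{..<q}" "set cs"] distinct_card[of cs] by simp
  qed
  define r where "r = (GREATEST r. good r)"
  have gr: "good r" unfolding r_def using GreatestI_nat[of good 0 q] g0 gb by blast
  have rmax: "r' \<le> r" if "good r'" for r' unfolding r_def using Greatest_le_nat[of good r' q] that gb by blast
  from gr obtain rs cs where rs: "length rs = r" "distinct rs" "set rs \<subseteq> {..<p}"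
     and cs: "length cs = r" "distinct cs" "set cs \<subseteq> {..<q}" and dM: "det (sub B rs cs) \<noteq> 0"
    unfolding good_def by blast
  have rq: "r \<le> q" using gb gr .
  show ?thesis
  proof (cases "r < q")
    case True
    have "card (set cs) = r" using distinct_card[OF cs(2)] cs(1) by simp
    then have "set cs \<noteq> {..<q}" using True by (metis card_lessThan less_irrefl)
    then have "\<exists>c. c \<in> {..<q} \<and> c \<notin> set cs" using cs(3) by blast
    then obtain c where c: "c < q" "c \<notin> set cs" by blast
    define cs' where "cs' = cs @ [c]"
    have cs': "length cs' = Suc r" "distinct cs'" "set cs' \<subseteq> {..<q}" using cs c unfolding cs'_def by auto
    have rsl: "rs!i < p" if "i < r" for i using rs that by (metis lessThan_iff nth_mem subsetD)
    have csl: "cs'!j < q" if "j < Suc r" for j using cs' that by (metis lessThan_iff nth_mem subsetD)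
    define N where "N i = sub B (rs @ [i]) cs'" for i
    have Nc: "N i \<in> carrier_mat (Suc r) (Suc r)" for i unfolding N_def using rs cs' by (metis length_append_singleton sub_carrier)
    have N0: "det (N i) = 0" if i: "i < p" for i
    proof (cases "i \<in> set rs")
      case True
      then obtain k where k: "k < r" "rs ! k = i" using rs(1) by (metis in_set_conv_nth)
      show ?thesis
      proof (rule det_identical_rows[OF Nc, of k r])
        show "k \<noteq> r" "k < Suc r" "r < Suc r" using k by auto
        show "row (N i) k = row (N i) r"
          using k rs(1) cs'(1) Nc by (intro eq_vecI) (auto simp: N_def nth_append)
      qed
    next
      case False
      have "\<not> good (Suc r)" using rmax by fastforce
      moreover have "distinct (rs @ [i])" "set (rs @ [i]) \<subseteq> {..<p}" "length (rs @ [i]) = Suc r"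
        using rs False i by auto
      ultimately show ?thesis unfolding good_def N_def using cs' by blast
    qed
    define D where "D k = mat r r (\<lambda>(i',j'). B (rs!i') (cs'! (if j' < k then j' else Suc j')))" for k
    define w where "w k = (-1)^(r+k) * det (D k)" for k
    have cof: "cofactor (N i) r k = w k" for i k
    proof -
      have "mat_delete (N i) r k = D k"
        using rs(1) cs'(1) by (intro eq_matI) (auto simp: mat_delete_def D_def N_def nth_append)
      then show ?thesis unfolding cofactor_def w_def by simp
    qed
    have lap: "det (N i) = (\<Sum>k<Suc r. B i (cs'!k) * w k)" for i
      using laplace_expansion_row[OF Nc, of r i] rs(1) cs'(1)
      by (simp add: cof[unfolded N_def] N_def nth_append)
    define z where "z j = (\<Sum>k<Suc r. if cs'!k = j then w k else 0)" for j
    have zk: "z (cs'!k0) = w k0" if "k0 < Suc r" for k0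
    proof -
      have "z (cs'!k0) = (\<Sum>k<Suc r. if k = k0 then w k else 0)"
        unfolding z_def using nth_eq_iff_index_eq[OF cs'(2)] that cs'(1)
        by (intro sum.cong) auto
      then show ?thesis using that by simp
    qed
    have z0: "z j = 0" if "j \<notin> set cs'" for j
      unfolding z_def using that cs'(1) by (intro sum.neutral) (auto)
    have wb: "\<bar>w k\<bar> \<le> fact (q-1) * s^(q-1)" for k
    proof -
      have "\<bar>det (D k)\<bar> \<le> fact r * s ^ r"
        by (rule det_bound[of _ r]) (use cs' rs rsl csl in \<open>auto simp: D_def intro!: b\<close>)
      also have "\<dots> \<le> fact (q-1) * s^(q-1)"
      proof (rule mult_mono)
        show "(fact r :: int) \<le> fact (q-1)" using True by (intro fact_mono) auto
        show "s ^ r \<le> s ^ (q - 1)" using True s by (intro power_increasing) auto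
      qed (use s in auto)
      finally show ?thesis unfolding w_def by (simp add: abs_mult)
    qed
    have "\<exists>j<q. z j \<noteq> 0"
    proof (intro exI conjI)
      show "c < q" by fact
      have "D r = sub B rs cs" using rs(1) cs(1) by (intro eq_matI) (auto simp: D_def cs'_def nth_append)
      then have "w r = det (sub B rs cs)" unfolding w_def by (simp flip: mult_2)
      moreover have "z c = w r" using zk[of r] cs(1) unfolding cs'_def by (simp add: nth_append)
      ultimately show "z c \<noteq> 0" using dM by simp
    qed
    moreover have "\<forall>j<q. \<bar>z j\<bar> \<le> fact (q-1) * s^(q-1)"
    proof (intro allI impI)
      fix j assume "j < q"
      show "\<bar>z j\<bar> \<le> fact (q-1) * s^(q-1)"
      proof (cases "j \<in> set cs'")
        case True
        then obtain k where "k < Suc r" "cs'!k = j" using cs'(1) by (metis in_set_conv_nth)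
        then show ?thesis using zk wb by metis
      next
        case False
        then show ?thesis using z0 s by simp
      qed
    qed
    moreover have "\<forall>i<p. (\<Sum>j<q. B i j * z j) = 0"
    proof (intro allI impI)
      fix i assume i: "i < p"
      have "(\<Sum>j<q. B i j * z j) = (\<Sum>j<q. \<Sum>k<Suc r. B i j * (if cs'!k = j then w k else 0))"
        unfolding z_def by (simp only: sum_distrib_left)
      also have "\<dots> = (\<Sum>k<Suc r. \<Sum>j<q. B i j * (if cs'!k = j then w k else 0))"
        by (rule sum.swap)
      also have "\<dots> = (\<Sum>k<Suc r. B i (cs'!k) * w k)"
      proof (rule sum.cong[OF refl])
        fix k assume "k \<in> {..<Suc r}"
        then have "cs'!k < q" using cs' by (metis lessThan_iff nth_mem subsetD)
        have "(\<Sum>j<q. B i j * (if cs'!k = j then w k else 0)) = (\<Sum>j<q. if j = cs'!k then B i (cs'!k) * w k else 0)"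
          by (rule sum.cong) auto
        then show "(\<Sum>j<q. B i j * (if cs'!k = j then w k else 0)) = B i (cs'!k) * w k"
          using \<open>cs'!k < q\<close> by simp
      qed
      also have "\<dots> = 0" using lap N0[OF i] by simp
      finally show "(\<Sum>j<q. B i j * z j) = 0" .
    qed
    ultimately show ?thesis by blast
  next
    case False
    then have rq: "r = q" using rq by simp
    define M where "M = sub B rs cs"
    have Mc: "M \<in> carrier_mat q q" unfolding M_def using rs cs rq by (metis sub_carrier)
    have setcs: "set cs = {..<q}"
      using card_subset_eq[of "{..<q}" "set cs"] cs distinct_card[of cs] rq by simp
    show ?thesis
    proof (intro disjI2 allI impI)
      fix x Mb j assume H: "\<forall>i<p. \<bar>\<Sum>j<q. B i j * x j\<bar> \<le> Mb" and j: "j < q"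
      obtain k where k: "k < q" "cs!k = j" using j setcs cs(1) rq by (metis in_set_conv_nth lessThan_iff)
      define xv where "xv = vec q (\<lambda>k. x (cs!k))"
      have xv: "xv \<in> carrier_vec q" unfolding xv_def by simp
      have Mx: "(M *\<^sub>v xv) $ l = (\<Sum>j<q. B (rs!l) j * x j)" if l: "l < q" for l
      proof -
        have "(M *\<^sub>v xv) $ l = (\<Sum>k<q. B (rs!l) (cs!k) * x (cs!k))"
          using l Mc rs cs rq by (simp add: M_def xv_def scalar_prod_def atLeast0LessThan)
        also have "\<dots> = (\<Sum>j\<in>(nth cs) ` {..<q}. B (rs!l) j * x j)"
          using sum.reindex[of "nth cs" "{..<q}" "\<lambda>j. B (rs!l) j * x j"] inj_on_nth[of cs "{..<q}"] cs rq
          by simp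
        also have "(nth cs) ` {..<q} = {..<q}"
        proof -
          have "(nth cs) ` {..<q} = set cs" unfolding set_conv_nth using cs(1) rq by blast
          then show ?thesis using setcs by simp
        qed
        finally show ?thesis by simp
      qed
      have Mxb: "\<bar>(M *\<^sub>v xv) $ l\<bar> \<le> Mb" if "l < q" for l
      proof -
        have "rs!l < p" using rs(1,3) that rq by (metis lessThan_iff nth_mem subsetD)
        then have "\<bar>\<Sum>j<q. B (rs!l) j * x j\<bar> \<le> Mb" using H by blast
        then show ?thesis using Mx[OF that] by simp
      qed
      define R where "R = replace_col M (M *\<^sub>v xv) k"
      have Rc: "R \<in> carrier_mat q q" unfolding R_def replace_col_def using Mc by (simp add: carrier_matD)
      have cr: "det R = xv $ k * det M" unfolding R_def by (rule cramer_lemma_mat[OF Mc xv k(1)])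
      have cb: "\<bar>cofactor R i k\<bar> \<le> fact (q-1) * s^(q-1)" if i: "i < q" for i
      proof -
        have "\<bar>det (mat_delete R i k)\<bar> \<le> fact (q - 1) * s ^ (q - 1)"
        proof (rule det_bound)
          show "mat_delete R i k \<in> carrier_mat (q - 1) (q - 1)" using mat_delete_carrier[OF Rc] .
          fix i' j' assume "i' < q - 1" "j' < q - 1"
          then show "\<bar>mat_delete R i k $$ (i', j')\<bar> \<le> s"
          proof -
            define i'' where "i'' = (if i' < i then i' else Suc i')"
            define j'' where "j'' = (if j' < k then j' else Suc j')"
            have ij: "i'' < q" "j'' < q" "j'' \<noteq> k" using \<open>i' < q - 1\<close> \<open>j' < q - 1\<close>
              unfolding i''_def j''_def by auto
            have "mat_delete R i k $$ (i', j') = R $$ (i'', j'')"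
              using Rc \<open>i' < q - 1\<close> \<open>j' < q - 1\<close> unfolding mat_delete_def i''_def j''_def
              by (simp add: carrier_matD)
            also have "\<dots> = M $$ (i'', j'')" unfolding R_def replace_col_def using Mc ij
              by (simp add: carrier_matD)
            also have "\<dots> = B (rs!i'') (cs!j'')" unfolding M_def using ij rs(1) cs(1) rq by simp
            finally have e: "mat_delete R i k $$ (i', j') = B (rs!i'') (cs!j'')" .
            have "rs!i'' < p" using rs(1,3) ij rq by (metis lessThan_iff nth_mem subsetD)
            moreover have "cs!j'' < q" using cs(1,3) ij rq by (metis lessThan_iff nth_mem subsetD)
            ultimately show ?thesis using e b by simp
          qed
        qed
        then show ?thesis unfolding cofactor_def by (simp add: abs_mult)
      qed
      have "\<bar>det R\<bar> = \<bar>\<Sum>i<q. R $$ (i,k) * cofactor R i k\<bar>"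
        using laplace_expansion_column[OF Rc k(1)] by simp
      also have "\<dots> \<le> (\<Sum>i<q. \<bar>R $$ (i,k)\<bar> * \<bar>cofactor R i k\<bar>)"
        unfolding abs_mult[symmetric] by (rule sum_abs)
      also have "\<dots> \<le> (\<Sum>i<q. Mb * (fact (q-1) * s^(q-1)))"
      proof (rule sum_mono)
        fix i assume "i \<in> {..<q}"
        then have i: "i < q" by simp
        have "R $$ (i,k) = (M *\<^sub>v xv) $ i" unfolding R_def replace_col_def using Mc i k by simp
        then have "\<bar>R $$ (i,k)\<bar> \<le> Mb" using Mxb[OF i] by simp
        then show "\<bar>R $$ (i,k)\<bar> * \<bar>cofactor R i k\<bar> \<le> Mb * (fact (q-1) * s^(q-1))"
          using cb[OF i] by (intro mult_mono) auto
      qed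
      also have "\<dots> = fact q * s^(q-1) * Mb"
        using j by (simp add: fact_reduce[of q] algebra_simps)
      finally have "\<bar>xv $ k * det M\<bar> \<le> fact q * s^(q-1) * Mb" using cr by simp
      moreover have "\<bar>xv $ k\<bar> \<le> \<bar>xv $ k * det M\<bar>"
      proof -
        have d1: "1 \<le> \<bar>det M\<bar>" using dM unfolding M_def by (cases "det (sub B rs cs) > 0") auto
        show ?thesis unfolding abs_mult using mult_left_mono[OF d1, of "\<bar>xv $ k\<bar>"] by simp
      qed
      moreover have "xv $ k = x j" unfolding xv_def using k by simp
      ultimately show "\<bar>x j\<bar> \<le> fact q * s^(q-1) * Mb" by simp
    qed
  qed
qed

lemma sum_select:
  fixes cl :: "nat list" and z a :: "nat \<Rightarrow> int"
  assumes "set cl \<subseteq> {..<d}"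
  shows "(\<Sum>j<d. a j * (\<Sum>k<length cl. if cl!k = j then z k else 0)) = (\<Sum>k<length cl. a (cl!k) * z k)"
proof -
  have "(\<Sum>j<d. a j * (\<Sum>k<length cl. if cl!k = j then z k else 0))
      = (\<Sum>j<d. \<Sum>k<length cl. a j * (if cl!k = j then z k else 0))"
    by (simp only: sum_distrib_left)
  also have "\<dots> = (\<Sum>k<length cl. \<Sum>j<d. a j * (if cl!k = j then z k else 0))"
    by (rule sum.swap)
  also have "\<dots> = (\<Sum>k<length cl. a (cl!k) * z k)"
  proof (rule sum.cong[OF refl])
    fix k assume "k \<in> {..<length cl}"
    then have ck: "cl!k < d" using assms by (metis lessThan_iff nth_mem subsetD)
    have "(\<Sum>j<d. a j * (if cl!k = j then z k else 0)) = (\<Sum>j<d. if j = cl!k then a (cl!k) * z k else 0)"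
      by (rule sum.cong) auto
    then show "(\<Sum>j<d. a j * (if cl!k = j then z k else 0)) = a (cl!k) * z k"
      using ck by simp
  qed
  finally show ?thesis .
qed

lemma select_at:
  fixes cl :: "nat list" and z :: "nat \<Rightarrow> int"
  assumes "distinct cl" "k0 < length cl"
  shows "(\<Sum>k<length cl. if cl!k = cl!k0 then z k else 0) = z k0"
proof -
  have "(\<Sum>k<length cl. if cl!k = cl!k0 then z k else 0) = (\<Sum>k<length cl. if k = k0 then z k else 0)"
    using nth_eq_iff_index_eq[OF assms(1)] assms(2) by (intro sum.cong) auto
  then show ?thesis using assms(2) by simp
qed

lemma select_out:
  fixes cl :: "nat list" and z :: "nat \<Rightarrow> int"
  assumes "j \<notin> set cl"
  shows "(\<Sum>k<length cl. if cl!k = j then z k else 0) = 0"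
  using assms by (intro sum.neutral) (auto)

lemma abs_shift:
  fixes Y Z :: int
  assumes "\<bar>Z\<bar> \<le> \<bar>Y\<bar>"
  shows "\<bar>Y + Z\<bar> = \<bar>Y\<bar> + sgn Y * Z" "\<bar>Y - Z\<bar> = \<bar>Y\<bar> - sgn Y * Z"
  using assms by (cases "Y > 0"; cases "Y = 0"; auto simp: sgn_if)+

lemma sq_le_l1sq:
  fixes y :: "nat \<Rightarrow> int"
  shows "(\<Sum>j<d. (y j)^2) \<le> (\<Sum>j<d. \<bar>y j\<bar>)^2"
proof (induction d)
  case 0 then show ?case by simp
next
  case (Suc d)
  have "0 \<le> (\<Sum>j<d. \<bar>y j\<bar>)" by (simp add: sum_nonneg)
  then have nn: "0 \<le> 2 * (\<Sum>j<d. \<bar>y j\<bar>) * \<bar>y d\<bar>" by simp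
  have e: "(\<Sum>j<Suc d. \<bar>y j\<bar>)^2 = (\<Sum>j<d. \<bar>y j\<bar>)^2 + 2 * (\<Sum>j<d. \<bar>y j\<bar>) * \<bar>y d\<bar> + (y d)^2"
    by (simp add: power2_sum)
  have "(\<Sum>j<Suc d. (y j)^2) = (\<Sum>j<d. (y j)^2) + (y d)^2" by simp
  then show ?case using e Suc nn by linarith
qed

lemma cube_step:
  fixes L x :: int
  assumes "0 \<le> x" "x \<le> L - 1"
  shows "x^3 + x < L^3 + L - L^2"
proof -
  have "x^3 \<le> (L-1)^3" using assms by (intro power_mono) auto
  moreover have "(L-1)^3 + (L-1) < L^3 + L - L^2"
  proof -
    have "(L-1)^3 = L^3 - 3*L^2 + 3*L - 1" by (simp add: power3_eq_cube power2_eq_square algebra_simps)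
    moreover have "2*L^2 - 3*L + 2 > 0"
    proof (cases "L \<le> 0")
      case True then show ?thesis by (smt (verit) zero_le_power2)
    next
      case False
      show ?thesis
      proof (cases "L = 1")
        case True then show ?thesis by simp
      next
        case f: False
        then have "L \<ge> 2" using False by simp
        then have "L*L \<ge> 2*L" using mult_right_mono[of 2 L L] by simp
        then show ?thesis unfolding power2_eq_square using \<open>L \<ge> 2\<close> by linarith
      qed
    qed
    ultimately show ?thesis by simp
  qed
  ultimately show ?thesis using assms by linarith
qed

lemma phi_contra:
  fixes L s2 A C W sig :: int
  assumes L: "0 \<le> L" "0 \<le> L + sig" "0 \<le> L - sig"
    and S2: "0 \<le> s2" "s2 \<le> L^2" and A: "0 \<le> A" "A \<le> (L+sig)^2" and C: "0 \<le> C" "C \<le> (L-sig)^2"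
    and AC: "A + C = 2 * s2 + 2 * W" and W: "W > 0"
    and m1: "L^3 + L - s2 \<le> (L+sig)^3 + (L+sig) - A"
    and m2: "L^3 + L - s2 \<le> (L-sig)^3 + (L-sig) - C"
  shows False
proof (cases "sig = 0")
  case True
  then show ?thesis using m1 m2 AC W by simp
next
  case False
  show ?thesis
  proof (cases "sig > 0")
    case True
    have "(L-sig)^3 + (L-sig) < L^3 + L - L^2" using True L by (intro cube_step) auto
    then show ?thesis using m2 C S2 by simp
  next
    case f2: False
    have "(L+sig)^3 + (L+sig) < L^3 + L - L^2" using False f2 L by (intro cube_step) auto
    then show ?thesis using m1 A S2 by simp
  qed
qed

lemma nth_image_set: "(nth cl) ` {..<length cl} = set cl"
  unfolding set_conv_nth by (auto simp: image_def)

lemma core: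
  fixes d :: nat and s t :: int and P :: "((nat \<Rightarrow> int) \<times> int) set" and y0 :: "nat \<Rightarrow> int"
  assumes fin: "finite P" and s0: "s \<ge> 0" and t0: "t \<ge> 0"
    and bnd: "\<And>a b j. (a,b) \<in> P \<Longrightarrow> j < d \<Longrightarrow> \<bar>a j\<bar> \<le> s"
    and bb: "\<And>a b. (a,b) \<in> P \<Longrightarrow> \<bar>b\<bar> \<le> t"
    and feas0: "\<And>a b. (a,b) \<in> P \<Longrightarrow> (\<Sum>j<d. a j * y0 j) \<ge> b"
  shows "\<exists>y. (\<forall>a b. (a,b) \<in> P \<longrightarrow> (\<Sum>j<d. a j * y j) \<ge> b)
           \<and> (\<forall>j<d. \<bar>y j\<bar> \<le> fact d * s^(d-1) * (t + 2 * fact d * s^d))"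
proof -
  define K where "K = fact d * s^(d-1) * (t + 2 * fact d * s^d)"
  have K0: "K \<ge> 0" unfolding K_def using s0 t0 by simp
  show ?thesis
  proof (cases "s = 0")
    case True
    have "b \<le> 0" if ab: "(a,b) \<in> P" for a b
    proof -
      have "(\<Sum>j<d. a j * y0 j) = 0"
        by (rule sum.neutral) (use bnd[OF ab] True in auto)
      then show ?thesis using feas0[OF ab] by simp
    qed
    then show ?thesis using K0 unfolding K_def by (intro exI[of _ "\<lambda>_. 0"]) auto
  next
    case False
    then have s1: "s \<ge> 1" using s0 by simp
    define feasible where "feasible y \<longleftrightarrow> (\<forall>a b. (a,b) \<in> P \<longrightarrow> (\<Sum>j<d. a j * y j) \<ge> b)" for y
    define l1 where "l1 y = (\<Sum>j<d. \<bar>y j\<bar>)" for y :: "nat \<Rightarrow> int"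
    define l2 where "l2 y = (\<Sum>j<d. (y j)^2)" for y :: "nat \<Rightarrow> int"
    define Phi where "Phi y = nat (l1 y ^3 + l1 y - l2 y)" for y
    have l1nn: "l1 y \<ge> 0" for y unfolding l1_def by (simp add: sum_nonneg)
    have l2nn: "l2 y \<ge> 0" for y unfolding l2_def by (simp add: sum_nonneg)
    have l21: "l2 y \<le> (l1 y)^2" for y unfolding l1_def l2_def by (rule sq_le_l1sq)
    have Phie: "int (Phi y) = l1 y ^3 + l1 y - l2 y" for y
    proof -
      have "(l1 y)^2 \<le> l1 y ^3 + l1 y"
      proof (cases "l1 y = 0")
        case True then show ?thesis by simp
      next
        case False
        then have "l1 y \<ge> 1" using l1nn[of y] by simp
        then have "(l1 y)^2 \<le> l1 y ^3" by (intro power_increasing) auto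
        then show ?thesis using l1nn[of y] by simp
      qed
      then show ?thesis unfolding Phi_def using l21[of y] by simp
    qed
    have "feasible y0" unfolding feasible_def using feas0 by blast
    then obtain y where fy: "feasible y" and ymin: "\<And>y'. feasible y' \<Longrightarrow> Phi y \<le> Phi y'"
      using ex_has_least_nat[of feasible y0 Phi] by blast
    define Dl where "Dl = fact (d-1) * s^(d-1)"
    have Dl0: "Dl \<ge> 0" unfolding Dl_def using s0 by simp
    define th where "th = int d * s * Dl"
    define J where "J = {j. j < d \<and> \<bar>y j\<bar> > Dl}"
    have Jfin: "finite J" unfolding J_def by simp
    define cl where "cl = sorted_list_of_set J"
    have cl: "distinct cl" "set cl = J" "set cl \<subseteq> {..<d}"
      unfolding cl_def using Jfin by (auto simp: J_def)
    define q where "q = length cl"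
    have qd: "q \<le> d" unfolding q_def using distinct_card[OF cl(1)] card_mono[OF _ cl(3)] by simp
    define T where "T = {ab \<in> P. (\<Sum>j<d. fst ab j * y j) - snd ab < th}"
    have "finite T" unfolding T_def using fin by simp
    then obtain rl where rl: "set rl = T" using finite_list by blast
    define p where "p = length rl"
    define B where "B i k = fst (rl!i) (cl!k)" for i k
    have rlP: "(fst (rl!i), snd (rl!i)) \<in> P" if "i < p" for i
      using that rl unfolding p_def T_def by (metis (no_types, lifting) mem_Collect_eq nth_mem prod.collapse)
    have clJ: "cl!k \<in> J" if "k < q" for k using that cl unfolding q_def by (metis nth_mem)
    have cld: "cl!k < d" if "k < q" for k using clJ[OF that] unfolding J_def by simp
    have Bb: "\<bar>B i k\<bar> \<le> s" if "i < p" "k < q" for i k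
      unfolding B_def using bnd[OF rlP[OF that(1)] cld[OF that(2)]] .
    have sumJ: "(\<Sum>k<q. f (cl!k)) = (\<Sum>j\<in>J. f j)" for f :: "nat \<Rightarrow> int"
    proof -
      have "(\<Sum>j\<in>J. f j) = (\<Sum>j\<in>(nth cl) ` {..<q}. f j)" using nth_image_set[of cl] cl(2) q_def by simp
      also have "\<dots> = (\<Sum>k<q. f (cl!k))"
        using sum.reindex[of "nth cl" "{..<q}" f] inj_on_nth[of cl "{..<q}"] cl(1) q_def by simp
      finally show ?thesis by simp
    qed
    have Dq: "fact (q-1) * s^(q-1) \<le> Dl"
      unfolding Dl_def
    proof (rule mult_mono)
      show "(fact (q-1) :: int) \<le> fact (d-1)" using qd by (intro fact_mono) auto
      show "s ^ (q-1) \<le> s ^ (d - 1)" using qd s1 by (intro power_increasing) auto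
    qed (use s0 in auto)
    from KL[of s p q B, OF s1 Bb]
    consider (ker) z where "\<exists>j<q. z j \<noteq> 0" "\<forall>j<q. \<bar>z j\<bar> \<le> fact (q-1) * s^(q-1)"
        "\<forall>i<p. (\<Sum>j<q. B i j * z j) = 0"
      | (inj) "\<forall>x M. (\<forall>i<p. \<bar>\<Sum>j<q. B i j * x j\<bar> \<le> M) \<longrightarrow> (\<forall>j<q. \<bar>x j\<bar> \<le> fact q * s^(q-1) * M)"
      by blast
    then show ?thesis
    proof cases
      case ker
      define Z where "Z j = (\<Sum>k<q. if cl!k = j then z k else 0)" for j
      have Zsum: "(\<Sum>j<d. a j * Z j) = (\<Sum>k<q. a (cl!k) * z k)" for a
        unfolding Z_def q_def by (rule sum_select[OF cl(3)])
      have ZJ: "Z (cl!k) = z k" if "k < q" for k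
        unfolding Z_def q_def using select_at[OF cl(1)] that q_def by simp
      have Zout: "Z j = 0" if "j \<notin> J" for j
        unfolding Z_def q_def using select_out[of j cl] that cl(2) by simp
      have Zb: "\<bar>Z j\<bar> \<le> Dl" for j
      proof (cases "j \<in> J")
        case True
        then obtain k where "k < q" "cl!k = j" using cl(2) unfolding q_def by (metis in_set_conv_nth)
        then show ?thesis using ZJ ker(2) Dq by force
      next
        case False then show ?thesis using Zout Dl0 by simp
      qed
      have Zle: "\<bar>Z j\<bar> \<le> \<bar>y j\<bar>" for j
      proof (cases "j \<in> J")
        case True then show ?thesis using Zb[of j] unfolding J_def by simp
      next
        case False then show ?thesis using Zout by simp
      qed
      have ZT: "(\<Sum>j<d. a j * Z j) = 0" if "(a,b) \<in> T" for a b
      proof -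
        have "(a,b) \<in> set rl" using that rl by simp
        then obtain i where i0: "i < length rl" "rl!i = (a,b)" by (metis in_set_conv_nth)
        then have i: "i < p" "rl!i = (a,b)" unfolding p_def by auto
        have "B i k = a (cl!k)" for k unfolding B_def using i(2) by simp
        then have "(\<Sum>j<d. a j * Z j) = (\<Sum>k<q. B i k * z k)" unfolding Zsum by simp
        then show ?thesis using ker(3) i(1) by simp
      qed
      have Zsmall: "\<bar>\<Sum>j<d. a j * Z j\<bar> \<le> th" if ab: "(a,b) \<in> P" for a b
      proof -
        have "\<bar>\<Sum>j<d. a j * Z j\<bar> \<le> (\<Sum>j<d. \<bar>a j\<bar> * \<bar>Z j\<bar>)"
          unfolding abs_mult[symmetric] by (rule sum_abs)
        also have "\<dots> \<le> (\<Sum>j<d. s * Dl)"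
        proof (rule sum_mono)
          fix j assume "j \<in> {..<d}"
          then have "\<bar>a j\<bar> \<le> s" using bnd[OF ab] by simp
          then show "\<bar>a j\<bar> * \<bar>Z j\<bar> \<le> s * Dl" using mult_mono[OF _ Zb[of j] s0 abs_ge_zero] by simp
        qed
        also have "\<dots> = th" unfolding th_def by simp
        finally show ?thesis .
      qed
      have feasZ: "feasible (\<lambda>j. y j + c * Z j)" if c: "c = 1 \<or> c = -1" for c
        unfolding feasible_def
      proof (intro allI impI)
        fix a b assume ab: "(a,b) \<in> P"
        have e: "(\<Sum>j<d. a j * (y j + c * Z j)) = (\<Sum>j<d. a j * y j) + c * (\<Sum>j<d. a j * Z j)"
        proof -
          have "(\<Sum>j<d. a j * (y j + c * Z j)) = (\<Sum>j<d. a j * y j + c * (a j * Z j))"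
            by (rule sum.cong) (auto simp: algebra_simps)
          then show ?thesis by (simp add: sum.distrib sum_distrib_left)
        qed
        have yb: "(\<Sum>j<d. a j * y j) \<ge> b" using fy ab unfolding feasible_def by blast
        show "(\<Sum>j<d. a j * (y j + c * Z j)) \<ge> b"
        proof (cases "(a,b) \<in> T")
          case True then show ?thesis using e yb ZT by simp
        next
          case False
          then have "(\<Sum>j<d. a j * y j) - b \<ge> th" unfolding T_def using ab by simp
          moreover have "\<bar>c * (\<Sum>j<d. a j * Z j)\<bar> \<le> th" using Zsmall[OF ab] c by (auto simp: abs_mult)
          ultimately show ?thesis using e by linarith
        qed
      qed
      define sig where "sig = (\<Sum>j<d. sgn (y j) * Z j)"
      have l1p: "l1 (\<lambda>j. y j + 1 * Z j) = l1 y + sig"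
        unfolding l1_def sig_def using abs_shift(1)[OF Zle] by (simp add: sum.distrib)
      have l1m: "l1 (\<lambda>j. y j + (-1) * Z j) = l1 y - sig"
        unfolding l1_def sig_def using abs_shift(2)[OF Zle] by (simp add: sum_subtractf)
      have l2pm: "l2 (\<lambda>j. y j + 1 * Z j) + l2 (\<lambda>j. y j + (-1) * Z j) = 2 * l2 y + 2 * l2 Z"
      proof -
        have "(y j + Z j)^2 + (y j - Z j)^2 = 2 * (y j)^2 + 2 * (Z j)^2" for j
          by (simp add: power2_eq_square algebra_simps)
        then show ?thesis unfolding l2_def by (simp add: sum.distrib[symmetric] sum_distrib_left)
      qed
      have l2Z: "l2 Z > 0"
      proof -
        obtain k where k: "k < q" "z k \<noteq> 0" using ker(1) by blast
        have "0 < (Z (cl!k))^2" using ZJ[OF k(1)] k(2) by simp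
        then show ?thesis unfolding l2_def
          by (intro sum_pos2[of _ "cl!k"]) (use cld[OF k(1)] in auto)
      qed
      have f1: "feasible (\<lambda>j. y j + 1 * Z j)" by (rule feasZ) simp
      have f2: "feasible (\<lambda>j. y j + (-1) * Z j)" by (rule feasZ) simp
      have m1: "int (Phi y) \<le> int (Phi (\<lambda>j. y j + 1 * Z j))" using ymin[OF f1] by (simp only: of_nat_le_iff)
      have m2: "int (Phi y) \<le> int (Phi (\<lambda>j. y j + (-1) * Z j))" using ymin[OF f2] by (simp only: of_nat_le_iff)
      show ?thesis
      proof (rule FalseE, rule phi_contra[of "l1 y" sig "l2 y" "l2 (\<lambda>j. y j + 1 * Z j)" "l2 (\<lambda>j. y j + (-1) * Z j)" "l2 Z"])
        show "0 \<le> l1 y" "0 \<le> l1 y + sig" "0 \<le> l1 y - sig" using l1nn l1p l1m by metis+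
        show "0 \<le> l2 y" "l2 y \<le> (l1 y)^2" using l2nn l21 by auto
        show "0 \<le> l2 (\<lambda>j. y j + 1 * Z j)" "l2 (\<lambda>j. y j + 1 * Z j) \<le> (l1 y + sig)^2"
          using l2nn l21[of "\<lambda>j. y j + 1 * Z j"] l1p by auto
        show "0 \<le> l2 (\<lambda>j. y j + (-1) * Z j)" "l2 (\<lambda>j. y j + (-1) * Z j) \<le> (l1 y - sig)^2"
          using l2nn l21[of "\<lambda>j. y j + (-1) * Z j"] l1m by auto
        show "l2 (\<lambda>j. y j + 1 * Z j) + l2 (\<lambda>j. y j + (-1) * Z j) = 2 * l2 y + 2 * l2 Z" by (rule l2pm)
        show "0 < l2 Z" by (rule l2Z)
        show "l1 y ^ 3 + l1 y - l2 y \<le> (l1 y + sig) ^ 3 + (l1 y + sig) - l2 (\<lambda>j. y j + 1 * Z j)"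
          using m1 unfolding Phie l1p .
        show "l1 y ^ 3 + l1 y - l2 y \<le> (l1 y - sig) ^ 3 + (l1 y - sig) - l2 (\<lambda>j. y j + (-1) * Z j)"
          using m2 unfolding Phie l1m .
      qed
    next
      case inj
      show ?thesis
      proof (intro exI conjI)
        show "\<forall>a b. (a,b) \<in> P \<longrightarrow> (\<Sum>j<d. a j * y j) \<ge> b" using fy unfolding feasible_def .
        show "\<forall>j<d. \<bar>y j\<bar> \<le> fact d * s^(d-1) * (t + 2 * fact d * s^d)"
        proof (intro allI impI)
          fix j assume j: "j < d"
          have thv: "th = fact d * s^d"
          proof -
            have "fact d = int d * fact (d-1)" by (rule fact_reduce) (use j in simp)
            moreover have "s^d = s * s^(d-1)" using j by (cases d) auto
            ultimately show ?thesis unfolding th_def Dl_def by (simp add: algebra_simps)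
          qed
          have th1: "th \<ge> 1"
          proof -
            have a1: "(1::int) \<le> fact d" by (rule fact_ge_1)
            have a2: "1 \<le> s^d" using s1 by (rule one_le_power)
            show ?thesis unfolding thv using mult_mono[OF a1 a2] by simp
          qed
          have rowb: "\<bar>\<Sum>k<q. B i k * y (cl!k)\<bar> \<le> t + 2 * th" if i: "i < p" for i
          proof -
            define a where "a = fst (rl!i)"
            define b where "b = snd (rl!i)"
            have "rl ! i \<in> set rl" by (rule nth_mem) (use i in \<open>simp add: p_def\<close>)
            then have abT: "(a,b) \<in> T" using rl unfolding a_def b_def by simp
            then have ab: "(a,b) \<in> P" unfolding T_def by simp
            have e1: "(\<Sum>k<q. B i k * y (cl!k)) = (\<Sum>j\<in>J. a j * y j)"
              unfolding B_def a_def using sumJ[of "\<lambda>j. fst (rl!i) j * y j"] by simp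
            have Jd: "J \<subseteq> {..<d}" unfolding J_def by auto
            have e2: "(\<Sum>j<d. a j * y j) = (\<Sum>j\<in>{..<d} - J. a j * y j) + (\<Sum>j\<in>J. a j * y j)"
              by (rule sum.subset_diff[OF Jd]) simp
            have r1: "\<bar>\<Sum>j\<in>{..<d} - J. a j * y j\<bar> \<le> th"
            proof -
              have "\<bar>\<Sum>j\<in>{..<d} - J. a j * y j\<bar> \<le> (\<Sum>j\<in>{..<d} - J. \<bar>a j\<bar> * \<bar>y j\<bar>)"
                unfolding abs_mult[symmetric] by (rule sum_abs)
              also have "\<dots> \<le> (\<Sum>j\<in>{..<d} - J. s * Dl)"
              proof (rule sum_mono)
                fix j assume jj: "j \<in> {..<d} - J"
                then have "\<bar>a j\<bar> \<le> s" using bnd[OF ab] by simp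
                moreover have "\<bar>y j\<bar> \<le> Dl" using jj unfolding J_def by auto
                ultimately show "\<bar>a j\<bar> * \<bar>y j\<bar> \<le> s * Dl" using mult_mono[OF _ _ s0 abs_ge_zero] by simp
              qed
              also have "\<dots> \<le> (\<Sum>j\<in>{..<d}. s * Dl)"
                by (rule sum_mono2) (use s0 Dl0 in auto)
              also have "\<dots> = th" unfolding th_def by simp
              finally show ?thesis .
            qed
            have "(\<Sum>j<d. a j * y j) \<ge> b" using fy ab unfolding feasible_def by blast
            moreover have "(\<Sum>j<d. a j * y j) - b < th" using abT unfolding T_def by simp
            moreover have "\<bar>b\<bar> \<le> t" using bb[OF ab] .
            ultimately have "\<bar>\<Sum>j<d. a j * y j\<bar> \<le> t + th" by linarith
            then show ?thesis using e1 e2 r1 by linarith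
          qed
          have yk: "\<bar>y (cl!k)\<bar> \<le> fact q * s^(q-1) * (t + 2 * th)" if "k < q" for k
          proof -
            have H: "(\<forall>i<p. \<bar>\<Sum>k<q. B i k * y (cl!k)\<bar> \<le> t + 2 * th) \<longrightarrow>
                (\<forall>k<q. \<bar>y (cl!k)\<bar> \<le> fact q * s^(q-1) * (t + 2 * th))"
              using spec[OF spec[OF inj, of "\<lambda>k. y (cl!k)"], of "t + 2 * th"] by simp
            have "\<forall>i<p. \<bar>\<Sum>k<q. B i k * y (cl!k)\<bar> \<le> t + 2 * th" using rowb by blast
            then show ?thesis using H that by blast
          qed
          show "\<bar>y j\<bar> \<le> fact d * s^(d-1) * (t + 2 * fact d * s^d)"
          proof (cases "j \<in> J")
            case True
            then obtain k where k: "k < q" "cl!k = j" using cl(2) unfolding q_def by (metis in_set_conv_nth)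
            have "fact q * s^(q-1) * (t + 2 * th) \<le> fact d * s^(d-1) * (t + 2 * th)"
            proof (rule mult_right_mono[OF mult_mono])
              show "(fact q :: int) \<le> fact d" using qd by (intro fact_mono) auto
              show "s ^ (q-1) \<le> s ^ (d - 1)" using qd s1 by (intro power_increasing) auto
            qed (use s0 t0 th1 in auto)
            then show ?thesis using yk[OF k(1)] k(2) thv by (simp add: mult.assoc)
          next
            case False
            then have "\<bar>y j\<bar> \<le> Dl" using j unfolding J_def by simp
            also have "Dl \<le> fact d * s^(d-1)" unfolding Dl_def
              by (rule mult_right_mono) (use s0 fact_mono[of "d-1" d] in auto)
            also have "\<dots> \<le> fact d * s^(d-1) * (t + 2 * fact d * s^d)"
              using mult_left_mono[of 1 "t + 2 * fact d * s^d" "fact d * s^(d-1)"] s0 t0 th1 thv by simp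
            finally show ?thesis .
          qed
        qed
      qed
    qed
  qed
qed

lemma final_arith:
  fixes d :: nat and s :: int
  assumes d: "d \<ge> 1" and s: "s \<ge> 0"
  shows "int d * (fact d * s^(d-1) * ((int d + 1) * s + 1 + 2 * fact d * s^d))
         \<le> (2 + int d + (int d)^2 * s)^(2*d+1)"
proof (cases "s = 0")
  case True
  show ?thesis
  proof (cases "d = 1")
    case True
    then show ?thesis using \<open>s = 0\<close> by simp
  next
    case False
    then have "d - 1 \<noteq> 0" using d by simp
    then have "0 < d - 1" by simp
    then have e: "s ^ (d - 1) = 0" unfolding \<open>s = 0\<close> by (rule zero_power)
    have "int d * (fact d * s^(d-1) * ((int d + 1) * s + 1 + 2 * fact d * s^d)) = 0"
      by (simp only: e mult_zero_right mult_zero_left)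
    moreover have "(0::int) \<le> (2 + int d + (int d)^2 * s)^(2*d+1)" using \<open>s = 0\<close> by simp
    ultimately show ?thesis by linarith
  qed
next
  case False
  then have s1: "s \<ge> 1" using s by simp
  define D where "D = int d"
  define N where "N = 2 + D + D^2 * s"
  define F where "F = (fact d :: int)"
  define X where "X = D * s"
  have D1: "D \<ge> 1" unfolding D_def using d by simp
  have F0: "F \<ge> 0" unfolding F_def by simp
  have FD: "F \<le> D^d" unfolding F_def D_def using fact_le_power[of d] by simp
  have X0: "X \<ge> 0" unfolding X_def using D1 s by simp
  have XN: "X \<le> N"
  proof -
    have h: "D * s * 1 \<le> D * s * D" by (rule mult_left_mono) (use D1 s in auto)
    then have "D * s \<le> D * D * s" by (metis mult.commute mult.left_commute mult.right_neutral)
    then show ?thesis unfolding X_def N_def power2_eq_square using D1 by linarith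
  qed
  have N1: "N \<ge> 1" unfolding N_def using D1 s by simp
  have N2D: "N \<ge> 2 * D"
  proof -
    have "D * D * 1 \<le> D * D * s" by (rule mult_left_mono) (use D1 s1 in auto)
    moreover have "D * 1 \<le> D * D" by (rule mult_left_mono) (use D1 in auto)
    ultimately show ?thesis unfolding N_def power2_eq_square by linarith
  qed
  have tN: "(D + 1) * s + 1 \<le> 2 * N"
  proof -
    have h: "D * s * 1 \<le> D * s * D" by (rule mult_left_mono) (use D1 s in auto)
    then have "D * s \<le> D * D * s" by (metis mult.commute mult.left_commute mult.right_neutral)
    moreover have "(D + 1) * s = D * s + s" by (simp add: algebra_simps)
    moreover have "s \<le> D * s" using mult_right_mono[of 1 D s] D1 s by simp
    ultimately show ?thesis unfolding N_def power2_eq_square using s D1 by (smt (verit))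
  qed
  have Dd: "D^d = D * D^(d-1)" using d by (metis power_eq_if not_one_le_zero)
  have sd: "s^d = s * s^(d-1)" using d by (metis power_eq_if not_one_le_zero)
  have A: "F * s^(d-1) \<le> D * X^(d-1)"
  proof -
    have "F * s^(d-1) \<le> D^d * s^(d-1)" using FD s by (simp add: mult_right_mono)
    also have "\<dots> = D * X^(d-1)" unfolding Dd X_def by (simp add: power_mult_distrib)
    finally show ?thesis .
  qed
  have B: "F * s^d \<le> X^d"
  proof -
    have "F * s^d \<le> D^d * s^d" using FD s by (simp add: mult_right_mono)
    also have "\<dots> = X^d" unfolding X_def by (simp add: power_mult_distrib)
    finally show ?thesis .
  qed
  have Xp: "X^k \<le> N^k" for k using X0 XN by (intro power_mono) auto
  have T1: "D * (F * s^(d-1)) * ((D + 1) * s + 1) \<le> 2 * D^2 * N^d"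
  proof -
    have a: "D * (F * s^(d-1)) \<le> D * (D * N^(d-1))"
      using A Xp[of "d-1"] D1 by (simp add: mult_left_mono order_trans)
    have "0 \<le> (D + 1) * s + 1" using D1 s by simp
    then have "D * (F * s^(d-1)) * ((D + 1) * s + 1) \<le> D * (D * N^(d-1)) * (2 * N)"
      by (intro mult_mono[OF a tN]) (use D1 N1 in auto)
    also have "\<dots> = 2 * D^2 * (N * N^(d-1))" by (simp add: power2_eq_square algebra_simps)
    also have "N * N^(d-1) = N^d" using d by (metis power_eq_if not_one_le_zero)
    finally show ?thesis .
  qed
  have T2: "2 * D * (F * s^(d-1)) * (F * s^d) \<le> 2 * D^2 * N^(2*d-1)"
  proof -
    have a: "F * s^(d-1) \<le> D * N^(d-1)" using A Xp[of "d-1"] D1 by (simp add: mult_left_mono order_trans)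
    have b: "F * s^d \<le> N^d" using B Xp[of d] by simp
    have "(F * s^(d-1)) * (F * s^d) \<le> (D * N^(d-1)) * N^d"
      by (intro mult_mono[OF a b]) (use D1 N1 F0 s in auto)
    then have "2 * D * ((F * s^(d-1)) * (F * s^d)) \<le> 2 * D * ((D * N^(d-1)) * N^d)"
      using D1 by (intro mult_left_mono) auto
    also have "(D * N^(d-1)) * N^d = D * N^(d-1+d)" by (simp add: power_add mult.assoc)
    also have "d - 1 + d = 2*d - 1" using d by simp
    finally show ?thesis by (simp add: power2_eq_square algebra_simps)
  qed
  have Nd: "N^d \<le> N^(2*d-1)" using N1 d by (intro power_increasing) auto
  have "int d * (fact d * s^(d-1) * ((int d + 1) * s + 1 + 2 * fact d * s^d))
      = D * (F * s^(d-1)) * ((D + 1) * s + 1) + 2 * D * (F * s^(d-1)) * (F * s^d)"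
    unfolding D_def F_def by (simp add: algebra_simps)
  also have "\<dots> \<le> 2 * D^2 * N^d + 2 * D^2 * N^(2*d-1)" using T1 T2 by simp
  also have "\<dots> \<le> 4 * D^2 * N^(2*d-1)" using Nd D1 by simp
  also have "\<dots> \<le> N^2 * N^(2*d-1)"
  proof (rule mult_right_mono)
    have "(2*D)^2 \<le> N^2" using N2D D1 by (intro power_mono) auto
    then show "4 * D^2 \<le> N^2" by (simp add: power_mult_distrib)
  qed (use N1 in simp)
  also have "\<dots> = N^(2*d+1)" using d by (simp add: power_add[symmetric])
  finally show ?thesis unfolding N_def D_def by simp
qed

lemma finite_atoms: "finite (atoms S)"
  by (induction S) auto

lemma holds_cong: "(\<And>ct. ct \<in> atoms S \<Longrightarrow> csat ct x = csat ct x') \<Longrightarrow> holds S x = holds S x'"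
  by (induction S) auto

lemma inner_neg: "inner (map uminus a) x = - inner a x"
  unfolding inner_def by (simp add: sum_negf)

lemma inner_map:
  assumes "length a = d"
  shows "inner a (map f [0..<d]) = (\<Sum>j<d. a!j * f j)"
  unfolding inner_def using assms by (intro sum.cong) (auto simp: nth_map_upt)

lemma inner_affine:
  fixes Li :: int
  assumes "length a = d"
  shows "inner a (map (\<lambda>j. r j + Li * w j) [0..<d]) = inner a (map r [0..<d]) + Li * (\<Sum>j<d. a!j * w j)"
  unfolding inner_map[OF assms] by (simp add: algebra_simps sum.distrib sum_distrib_left)

lemma ceil_div_iff:
  fixes L u v :: int
  assumes L: "L > 0"
  shows "L * v \<ge> u \<longleftrightarrow> v \<ge> - ((- u) div L)"
proof -
  define c where "c = - ((- u) div L)"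
  have h1: "L * ((- u) div L) \<le> - u" using L by (metis div_mod_decomp_int le_add_same_cancel1 pos_mod_sign mult.commute)
  have h2: "- u < L * ((- u) div L) + L" using L
    by (metis add.commute div_mod_decomp_int mult.commute pos_mod_bound add_less_cancel_left)
  have u1: "u \<le> L * c" unfolding c_def using h1 by simp
  have u2: "L * (c - 1) < u" unfolding c_def using h2 by (simp add: algebra_simps)
  show ?thesis
  proof
    assume "L * v \<ge> u"
    show "v \<ge> - ((- u) div L)"
    proof (rule ccontr)
      assume "\<not> v \<ge> - ((- u) div L)"
      then have "v \<le> c - 1" unfolding c_def by simp
      then have "L * v \<le> L * (c - 1)" using L by simp
      then show False using u2 \<open>L * v \<ge> u\<close> by simp
    qed
  next
    assume "v \<ge> - ((- u) div L)"
    then have "v \<ge> c" unfolding c_def .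
    then have "L * c \<le> L * v" using L by (intro mult_left_mono) auto
    then show "L * v \<ge> u" using u1 by linarith
  qed
qed

lemma ceil_div_bound:
  fixes L u A B :: int
  assumes L: "L \<ge> 1" and A: "A \<ge> 0" and B: "B \<ge> 0" and u: "\<bar>u\<bar> \<le> A + L * B"
  shows "\<bar>- ((- u) div L)\<bar> \<le> A + B"
proof -
  define c where "c = - ((- u) div L)"
  have ge: "L * v \<ge> u \<longleftrightarrow> v \<ge> c" for v unfolding c_def using ceil_div_iff L by simp
  have c1: "L * c \<ge> u" using ge by simp
  have c2: "L * (c - 1) < u" using ge[of "c - 1"] by simp
  have "c \<le> A + B"
  proof (rule ccontr)
    assume "\<not> c \<le> A + B"
    then have "c - 1 \<ge> A + B" by simp
    then have "L * (c - 1) \<ge> L * (A + B)" using L by (simp add: mult_left_mono)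
    moreover have "L * A \<ge> A" using mult_right_mono[of 1 L A] L A by simp
    ultimately show False using c2 u by (simp add: algebra_simps)
  qed
  moreover have "c \<ge> - (A + B)"
  proof (rule ccontr)
    assume "\<not> c \<ge> - (A + B)"
    then have "c + 1 \<le> - (A + B)" by simp
    then have "L * (c + 1) \<le> L * (- (A + B))" using L by (simp add: mult_left_mono)
    moreover have "L * A \<ge> A" using mult_right_mono[of 1 L A] L A by simp
    ultimately show False using c1 u L by (simp add: algebra_simps)
  qed
  ultimately show ?thesis unfolding c_def by simp
qed

fun gc :: "int list \<Rightarrow> constr \<Rightarrow> (int list \<times> int) list" where
  "gc x0 (Eq a c) = (if inner a x0 = c then [(a,c), (map uminus a, - c)]
      else if inner a x0 > c then [(a, c + 1)] else [(map uminus a, 1 - c)])"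
| "gc x0 (Geq a c) = (if inner a x0 \<ge> c then [(a,c)] else [(map uminus a, 1 - c)])"
| "gc x0 (Dvd a c m) = []"

lemma gc_sat: "(al, g) \<in> set (gc x0 ct) \<Longrightarrow> inner al x0 \<ge> g"
  by (cases ct) (auto simp: inner_neg split: if_splits)

lemma gc_csat:
  assumes "\<And>al g. (al, g) \<in> set (gc x0 ct) \<Longrightarrow> inner al x \<ge> g" and "\<not> (\<exists>a c m. ct = Dvd a c m)"
  shows "csat ct x = csat ct x0"
proof (cases ct)
  case (Eq a c)
  consider (e) "inner a x0 = c" | (g) "inner a x0 > c" | (l) "inner a x0 < c" by linarith
  then show ?thesis
  proof cases
    case e
    then have "inner a x \<ge> c" "inner (map uminus a) x \<ge> - c" using assms(1) Eq by auto
    then show ?thesis using Eq e by (simp add: inner_neg)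
  next
    case g
    then have "inner a x \<ge> c + 1" using assms(1) Eq by auto
    then show ?thesis using Eq g by simp
  next
    case l
    then have "inner (map uminus a) x \<ge> 1 - c" using assms(1) Eq by auto
    then show ?thesis using Eq l by (simp add: inner_neg)
  qed
next
  case (Geq a c)
  show ?thesis
  proof (cases "inner a x0 \<ge> c")
    case True
    then have "inner a x \<ge> c" using assms(1) Geq by auto
    then show ?thesis using Geq True by simp
  next
    case False
    then have "inner (map uminus a) x \<ge> 1 - c" using assms(1) Geq by auto
    then show ?thesis using Geq False by (simp add: inner_neg)
  qed
next
  case (Dvd a c m)
  then show ?thesis using assms(2) by simp
qed

lemma vnorm_le:
  assumes "vnorm a \<le> s" "i < length a"
  shows "\<bar>a!i\<bar> \<le> int s"
proof -
  have "nat \<bar>a!i\<bar> \<in> insert 0 (set (map (\<lambda>v. nat \<bar>v\<bar>) a))" using assms(2) by simp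
  then have "nat \<bar>a!i\<bar> \<le> vnorm a" unfolding vnorm_def by (intro Max_ge) auto
  then show ?thesis using assms(1) by simp
qed

lemma gc_bound:
  assumes "(al, g) \<in> set (gc x0 ct)" "constr_wf d ct" "cbound ct s"
  shows "length al = d \<and> (\<forall>j<d. \<bar>al!j\<bar> \<le> int s) \<and> \<bar>g\<bar> \<le> int s + 1"
proof (cases ct)
  case (Eq a c)
  have "\<forall>j<d. \<bar>a!j\<bar> \<le> int s" using assms Eq vnorm_le[of a s] by auto
  moreover have "\<bar>c\<bar> \<le> int s" using assms Eq by auto
  ultimately show ?thesis using assms Eq by (auto split: if_splits)
next
  case (Geq a c)
  have "\<forall>j<d. \<bar>a!j\<bar> \<le> int s" using assms Geq vnorm_le[of a s] by auto
  moreover have "\<bar>c\<bar> \<le> int s" using assms Geq by auto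
  ultimately show ?thesis using assms Geq by (auto split: if_splits)
next
  case (Dvd a c m)
  then show ?thesis using assms by simp
qed

lemma sys_norm_bound: "ct \<in> atoms S \<Longrightarrow> cbound ct (sys_norm S)"
proof -
  define g where "g ct = (case ct of Eq a c \<Rightarrow> max (vnorm a) (nat \<bar>c\<bar>) | Geq a c \<Rightarrow> max (vnorm a) (nat \<bar>c\<bar>) | Dvd a c m \<Rightarrow> 0)" for ct
  have cb: "cbound ct s \<longleftrightarrow> g ct \<le> s" for ct s by (cases ct) (auto simp: g_def)
  define s0 where "s0 = Max (insert 0 (g ` atoms S))"
  have "\<forall>ct\<in>atoms S. cbound ct s0" unfolding cb s0_def using finite_atoms by auto
  then have "\<forall>ct\<in>atoms S. cbound ct (sys_norm S)" unfolding sys_norm_def by (rule LeastI)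
  then show "ct \<in> atoms S \<Longrightarrow> cbound ct (sys_norm S)" by blast
qed

lemma sys_lcm_pos:
  assumes "linsys d S"
  shows "sys_lcm S > 0"
proof -
  have "0 \<notin> modulus ` atoms S"
  proof
    assume "0 \<in> modulus ` atoms S"
    then obtain ct where ct: "ct \<in> atoms S" "modulus ct = 0" by auto
    then have "constr_wf d ct" using assms unfolding linsys_def by auto
    then show False using ct by (cases ct) auto
  qed
  moreover have "finite (modulus ` atoms S)" using finite_atoms by simp
  ultimately have "Lcm (modulus ` atoms S) \<noteq> 0" using Lcm_0_iff_nat by blast
  then show ?thesis unfolding sys_lcm_def by simp
qed

theorem theorem2:
  fixes d :: nat and S :: lsys
  assumes "linsys d S" and "satisfiable d S"
  shows "\<exists>x. is_solution d S x \<and>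
           norm1 x \<le> sys_lcm S * (d + (2 + d + d^2 * sys_norm S) ^ (2*d+1))"
proof -
  note ls = assms(1)
  obtain x0 where x0l: "length x0 = d" and x0h: "holds S x0"
    using assms(2) unfolding satisfiable_def is_solution_def by blast
  define L where "L = sys_lcm S"
  have Lpos: "L > 0" unfolding L_def by (rule sys_lcm_pos[OF ls])
  define Li where "Li = int L"
  have Li1: "Li \<ge> 1" using Lpos unfolding Li_def by simp
  have mdvd: "modulus ct dvd L" if "ct \<in> atoms S" for ct
    unfolding L_def sys_lcm_def by (rule dvd_Lcm) (use that in simp)
  define s where "s = sys_norm S"
  have sb: "cbound ct s" if "ct \<in> atoms S" for ct unfolding s_def using sys_norm_bound that .
  have wf: "constr_wf d ct" if "ct \<in> atoms S" for ct using ls that unfolding linsys_def by blast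
  define r where "r j = x0!j mod Li" for j
  define q0 where "q0 j = x0!j div Li" for j
  have r0: "0 \<le> r j" "r j \<le> Li - 1" for j unfolding r_def using Li1 by auto
  have x0e: "x0 = map (\<lambda>j. r j + Li * q0 j) [0..<d]"
    by (rule nth_equalityI) (use x0l in \<open>simp_all add: r_def q0_def mod_mult_div_eq\<close>)
  define rv where "rv = map r [0..<d]"
  define G where "G = (\<Union>ct\<in>atoms S. set (gc x0 ct))"
  have Gfin: "finite G" unfolding G_def using finite_atoms by simp
  have Gprop: "length al = d \<and> (\<forall>j<d. \<bar>al!j\<bar> \<le> int s) \<and> \<bar>g\<bar> \<le> int s + 1" if "(al,g) \<in> G" for al g
  proof -
    from that obtain ct where "ct \<in> atoms S" "(al,g) \<in> set (gc x0 ct)" unfolding G_def by blast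
    then show ?thesis using gc_bound wf sb by blast
  qed
  have Gsat: "inner al x0 \<ge> g" if "(al,g) \<in> G" for al g
    using that gc_sat unfolding G_def by blast
  define cdv where "cdv u = - ((- u) div Li)" for u
  define P where "P = (\<lambda>(al,g). ((\<lambda>j. al!j), cdv (g - inner al rv))) ` G"
  define t where "t = (int d + 1) * int s + 1"
  have irv: "\<bar>inner al rv\<bar> \<le> Li * (int d * int s)" if "length al = d" "\<forall>j<d. \<bar>al!j\<bar> \<le> int s" for al
  proof -
    have "\<bar>inner al rv\<bar> = \<bar>\<Sum>j<d. al!j * r j\<bar>" unfolding rv_def using inner_map[OF that(1)] by simp
    also have "\<dots> \<le> (\<Sum>j<d. \<bar>al!j\<bar> * \<bar>r j\<bar>)" unfolding abs_mult[symmetric] by (rule sum_abs)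
    also have "\<dots> \<le> (\<Sum>j<d. int s * Li)"
    proof (rule sum_mono)
      fix j assume "j \<in> {..<d}"
      then have a: "\<bar>al!j\<bar> \<le> int s" using that(2) by simp
      have b: "\<bar>r j\<bar> \<le> Li" using r0[of j] by simp
      show "\<bar>al!j\<bar> * \<bar>r j\<bar> \<le> int s * Li" using mult_mono[OF a b] by simp
    qed
    also have "\<dots> = Li * (int d * int s)" by (simp add: algebra_simps)
    finally show ?thesis .
  qed
  have affx0: "inner al x0 = inner al rv + Li * (\<Sum>j<d. al!j * q0 j)" if "length al = d" for al
    using inner_affine[OF that, of r Li q0] x0e unfolding rv_def by simp
  have "\<exists>y. (\<forall>a b. (a,b) \<in> P \<longrightarrow> (\<Sum>j<d. a j * y j) \<ge> b)
           \<and> (\<forall>j<d. \<bar>y j\<bar> \<le> fact d * (int s)^(d-1) * (t + 2 * fact d * (int s)^d))"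
  proof (rule core[of P "int s" t d q0])
    show "finite P" unfolding P_def using Gfin by simp
    show "0 \<le> int s" by simp
    show "0 \<le> t" unfolding t_def by simp
  next
    fix a b j assume ab: "(a,b) \<in> P" and j: "j < d"
    from ab obtain al g where alg: "(al,g) \<in> G" "a = (\<lambda>j. al!j)" unfolding P_def by auto
    show "\<bar>a j\<bar> \<le> int s" using Gprop[OF alg(1)] alg(2) j by simp
  next
    fix a b assume ab: "(a,b) \<in> P"
    from ab obtain al g where alg: "(al,g) \<in> G" "b = cdv (g - inner al rv)" unfolding P_def by auto
    have gp: "length al = d" "\<forall>j<d. \<bar>al!j\<bar> \<le> int s" "\<bar>g\<bar> \<le> int s + 1" using Gprop[OF alg(1)] by auto
    have "\<bar>g - inner al rv\<bar> \<le> (int s + 1) + Li * (int d * int s)" using gp(3) irv[OF gp(1,2)] by linarith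
    then have "\<bar>cdv (g - inner al rv)\<bar> \<le> (int s + 1) + int d * int s"
      unfolding cdv_def using ceil_div_bound[where L=Li and A="int s + 1" and B="int d * int s" and u="g - inner al rv"] Li1
      by simp
    then show "\<bar>b\<bar> \<le> t" unfolding t_def alg(2) by (simp add: algebra_simps)
  next
    fix a b assume ab: "(a,b) \<in> P"
    from ab obtain al g where alg: "(al,g) \<in> G" "a = (\<lambda>j. al!j)" "b = cdv (g - inner al rv)"
      unfolding P_def by auto
    have gp: "length al = d" using Gprop[OF alg(1)] by auto
    have "Li * (\<Sum>j<d. al!j * q0 j) \<ge> g - inner al rv" using Gsat[OF alg(1)] affx0[OF gp] by simp
    then have "(\<Sum>j<d. al!j * q0 j) \<ge> cdv (g - inner al rv)"
      unfolding cdv_def using ceil_div_iff Li1 by simp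
    then show "(\<Sum>j<d. a j * q0 j) \<ge> b" using alg by simp
  qed
  then obtain y where yf: "\<And>a b. (a,b) \<in> P \<Longrightarrow> (\<Sum>j<d. a j * y j) \<ge> b"
    and yb: "\<And>j. j < d \<Longrightarrow> \<bar>y j\<bar> \<le> fact d * (int s)^(d-1) * (t + 2 * fact d * (int s)^d)"
    by blast
  define K where "K = fact d * (int s)^(d-1) * (t + 2 * fact d * (int s)^d)"
  define x where "x = map (\<lambda>j. r j + Li * y j) [0..<d]"
  have xl: "length x = d" unfolding x_def by simp
  have affx: "inner al x = inner al rv + Li * (\<Sum>j<d. al!j * y j)" if "length al = d" for al
    using inner_affine[OF that, of r Li y] unfolding rv_def x_def by simp
  have Gx: "inner al x \<ge> g" if "(al,g) \<in> G" for al g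
  proof -
    have gp: "length al = d" using Gprop[OF that] by auto
    have "((\<lambda>j. al!j), cdv (g - inner al rv)) \<in> P" unfolding P_def using that by force
    then have "(\<Sum>j<d. al!j * y j) \<ge> cdv (g - inner al rv)" using yf by simp
    then have "Li * (\<Sum>j<d. al!j * y j) \<ge> g - inner al rv" unfolding cdv_def using ceil_div_iff Li1 by simp
    then show ?thesis using affx[OF gp] by simp
  qed
  have hx: "holds S x = holds S x0"
  proof (rule holds_cong)
    fix ct assume ct: "ct \<in> atoms S"
    show "csat ct x = csat ct x0"
    proof (cases "\<exists>a c m. ct = Dvd a c m")
      case True
      then obtain a c m where e: "ct = Dvd a c m" by blast
      have al: "length a = d" using wf[OF ct] e by simp
      have "m dvd L" using mdvd[OF ct] e by simp
      then have mL: "int m dvd Li" unfolding Li_def by simp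
      have "inner a x - inner a x0 = Li * ((\<Sum>j<d. a!j * y j) - (\<Sum>j<d. a!j * q0 j))"
        using affx[OF al] affx0[OF al] by (simp add: algebra_simps)
      then have "int m dvd inner a x - inner a x0" using mL by simp
      then have "inner a x mod int m = inner a x0 mod int m" by (simp add: mod_eq_dvd_iff)
      then show ?thesis using e by simp
    next
      case False
      show ?thesis
      proof (rule gc_csat[OF _ False])
        fix al g assume "(al, g) \<in> set (gc x0 ct)"
        then have "(al,g) \<in> G" unfolding G_def using ct by blast
        then show "g \<le> inner al x" by (rule Gx)
      qed
    qed
  qed
  have sol: "is_solution d S x" unfolding is_solution_def using xl hx x0h by simp
  have n1: "int (norm1 x) = (\<Sum>j<d. \<bar>r j + Li * y j\<bar>)"
  proof -
    have "norm1 x = (\<Sum>j<d. nat \<bar>r j + Li * y j\<bar>)"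
      unfolding norm1_def x_def
      by (simp add: sum_set_upt_conv_sum_list_nat[symmetric] atLeast0LessThan comp_def)
    then show ?thesis by simp
  qed
  have K0: "K \<ge> 0" unfolding K_def t_def by simp
  have "int (norm1 x) \<le> (\<Sum>j<d. (Li - 1) + Li * K)"
    unfolding n1
  proof (rule sum_mono)
    fix j assume "j \<in> {..<d}"
    then have "\<bar>y j\<bar> \<le> K" using yb unfolding K_def by simp
    then have "Li * \<bar>y j\<bar> \<le> Li * K" using Li1 by (simp add: mult_left_mono)
    then have h: "\<bar>Li * y j\<bar> \<le> Li * K" using Li1 by (simp add: abs_mult)
    have "\<bar>r j + Li * y j\<bar> \<le> \<bar>r j\<bar> + \<bar>Li * y j\<bar>" by (rule abs_triangle_ineq)
    then show "\<bar>r j + Li * y j\<bar> \<le> (Li - 1) + Li * K" using h r0[of j] by linarith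
  qed
  also have "\<dots> = int d * (Li - 1) + Li * (int d * K)" by (simp add: algebra_simps)
  also have "\<dots> \<le> Li * (int d + (2 + int d + (int d)^2 * int s)^(2*d+1))"
  proof (cases "d = 0")
    case True then show ?thesis using Li1 by simp
  next
    case False
    have "int d * K \<le> (2 + int d + (int d)^2 * int s)^(2*d+1)"
      unfolding K_def t_def using final_arith[of d "int s"] False by simp
    then have "Li * (int d * K) \<le> Li * (2 + int d + (int d)^2 * int s)^(2*d+1)"
      using Li1 by (simp add: mult_left_mono)
    moreover have "int d * (Li - 1) \<le> Li * int d" by (simp add: algebra_simps)
    ultimately show ?thesis by (simp add: algebra_simps)
  qed
  also have "\<dots> = int (sys_lcm S * (d + (2 + d + d^2 * sys_norm S) ^ (2*d+1)))"
    unfolding Li_def L_def s_def by (simp only: of_nat_mult of_nat_add of_nat_power of_nat_numeral)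
  finally have "norm1 x \<le> sys_lcm S * (d + (2 + d + d^2 * sys_norm S) ^ (2*d+1))" by linarith
  then show ?thesis using sol by blast
qed

end
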